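(* Let $N$ be a locally compact separable metric space and let $\{\psi_k\}_{k\in\mathbb{N}}$ be a Schauder basis of $C_0(N)$. Let $\mathcal{M}(N)=\{m(\mu):\mu\in\mathcal{P}(N)\}\subset\mathbb{R}^{\mathbb{N}}$, where $m(\mu)=(\int_N\psi_k\,d\mu)_{k\in\mathbb{N}}$. Then the moment transform $\mathcal{K}:\mathcal{P}(N)\to\mathcal{M}(N)$, $\mu\mapsto m(\mu)$, is a homeomorphism, where $\mathcal{P}(N)$ carries the weak topology and $\mathcal{M}(N)$ carries the subspace topology induced by the product topology on $\mathbb{R}^{\mathbb{N}}$.
   Context: - $\mathcal{P}(N)$ is the set of Borel probability measures on $N$, with the weak topology (convergence against bounded continuous functions). - $C_0(N)$ is the space of continuous real-valued functions on $N$ vanishing at infinity, with the sup norm. *)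

theory Defs
  imports "HOL-Probability.Probability"
begin

definition C0 :: "('a::metric_space \<Rightarrow> real) \<Rightarrow> bool" where
  "C0 f \<longleftrightarrow> continuous_on UNIV f \<and>
     (\<forall>e>0. \<exists>K. compact K \<and> (\<forall>x. x \<notin> K \<longrightarrow> \<bar>f x\<bar> < e))"

definition schauder_basis_C0 :: "(nat \<Rightarrow> 'a::metric_space \<Rightarrow> real) \<Rightarrow> bool" where
  "schauder_basis_C0 \<psi> \<longleftrightarrow> (\<forall>k. C0 (\<psi> k)) \<and>
     (\<forall>f. C0 f \<longrightarrow> (\<exists>!c::nat \<Rightarrow> real.
        uniform_limit UNIV (\<lambda>n x. \<Sum>k<n. c k * \<psi> k x) f sequentially))"

definition prob_measures :: "'a::topological_space measure set" where
  "prob_measures = {M. prob_space M \<and> sets M = sets borel}"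

definition bounded_continuous :: "('a::topological_space \<Rightarrow> real) \<Rightarrow> bool" where
  "bounded_continuous f \<longleftrightarrow> continuous_on UNIV f \<and> bounded (range f)"

definition weak_topology :: "'a::topological_space measure topology" where
  "weak_topology = subtopology
     (topology_generated_by
        {{M. integral\<^sup>L M f \<in> U} | f U. bounded_continuous f \<and> open U})
     prob_measures"

definition moment :: "(nat \<Rightarrow> 'a \<Rightarrow> real) \<Rightarrow> 'a measure \<Rightarrow> (nat \<Rightarrow> real)" where
  "moment \<psi> M = (\<lambda>k. integral\<^sup>L M (\<psi> k))"

end

theory Submission
  imports Defs
begin

lemma C0_bounded:
  assumes "C0 f" obtains B where "\<And>x. \<bar>f x\<bar> \<le> B"
proof -
  from assms obtain K where K: "compact K" "\<And>x. x \<notin> K \<Longrightarrow> \<bar>f x\<bar> < 1"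
    unfolding C0_def by (meson zero_less_one)
  have "continuous_on K f" using assms unfolding C0_def by (meson continuous_on_subset subset_UNIV)
  then have "compact (f ` K)" using K(1) compact_continuous_image by blast
  then obtain B0 where "\<And>y. y \<in> f ` K \<Longrightarrow> norm y \<le> B0"
    by (meson bounded_iff compact_imp_bounded)
  then have "\<bar>f x\<bar> \<le> max B0 1" for x using K(2)[of x] by (cases "x \<in> K") force+
  then show ?thesis using that by blast
qed

lemma bc_bounded:
  assumes "bounded_continuous f" obtains B where "\<And>x. \<bar>f x\<bar> \<le> B"
  using assms unfolding bounded_continuous_def bounded_iff by (metis rangeI real_norm_def)

lemma C0_bc: "C0 f \<Longrightarrow> bounded_continuous f"
  unfolding bounded_continuous_def bounded_iff
  by (metis C0_bounded C0_def rangeE real_norm_def)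

lemma prob_measuresD:
  assumes "M \<in> prob_measures" shows "prob_space M" "sets M = sets borel" "space M = UNIV"
  using assms unfolding prob_measures_def by (auto dest: sets_eq_imp_space_eq)

lemma bc_integrable:
  assumes "M \<in> prob_measures" "bounded_continuous f"
  shows "integrable M f"
proof -
  interpret prob_space M using prob_measuresD assms by blast
  obtain B where B: "\<And>x. \<bar>f x\<bar> \<le> B" using bc_bounded assms(2) by blast
  have "f \<in> borel_measurable borel"
    using assms(2) unfolding bounded_continuous_def by (simp add: borel_measurable_continuous_onI)
  then have "f \<in> borel_measurable M"
    using prob_measuresD(2)[OF assms(1)] measurable_cong_sets by blast
  then show ?thesis using B by (intro integrable_const_bound[where B=B]) auto
qed

lemma integral_close:
  assumes "M \<in> prob_measures" "bounded_continuous f" "bounded_continuous g"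
    "\<And>x. \<bar>f x - g x\<bar> \<le> e"
  shows "\<bar>integral\<^sup>L M f - integral\<^sup>L M g\<bar> \<le> e"
proof -
  interpret prob_space M using prob_measuresD assms by blast
  have i: "integrable M f" "integrable M g" using bc_integrable assms by blast+
  have "\<bar>integral\<^sup>L M f - integral\<^sup>L M g\<bar> = \<bar>integral\<^sup>L M (\<lambda>x. f x - g x)\<bar>"
    using i by simp
  also have "\<dots> \<le> integral\<^sup>L M (\<lambda>x. \<bar>f x - g x\<bar>)"
    by (rule integral_abs_bound)
  also have "\<dots> \<le> integral\<^sup>L M (\<lambda>x. e)"
    using i assms(4) by (intro integral_mono) auto
  also have "\<dots> = e" by (simp add: prob_space)
  finally show ?thesis .
qed

lemma approx_tendsto:
  fixes a :: "nat \<Rightarrow> real"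
  assumes "\<And>e. e > 0 \<Longrightarrow> \<exists>b bl. b \<longlonglongrightarrow> bl \<and> (\<forall>\<^sub>F n in sequentially. \<bar>a n - b n\<bar> \<le> e) \<and> \<bar>A - bl\<bar> \<le> e"
  shows "a \<longlonglongrightarrow> A"
proof (rule LIMSEQ_I)
  fix r :: real assume r: "r > 0"
  obtain b bl where b: "b \<longlonglongrightarrow> bl" "\<forall>\<^sub>F n in sequentially. \<bar>a n - b n\<bar> \<le> r/4" "\<bar>A - bl\<bar> \<le> r/4"
    using assms[of "r/4"] r by auto
  have "\<forall>\<^sub>F n in sequentially. dist (b n) bl < r/4" using b(1) r tendsto_iff[THEN iffD1, OF b(1), rule_format, of "r/4"] by simp
  with b(2) have "\<forall>\<^sub>F n in sequentially. norm (a n - A) < r"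
    by eventually_elim (use b(3) in \<open>auto simp: dist_real_def abs_if split: if_splits\<close>)
  then show "\<exists>no. \<forall>n\<ge>no. norm (a n - A) < r" by (simp add: eventually_sequentially)
qed

lemma integral_partial:
  assumes "schauder_basis_C0 \<psi>" "M \<in> prob_measures"
  shows "integral\<^sup>L M (\<lambda>x. \<Sum>k<N. c k * \<psi> k x) = (\<Sum>k<N. c k * moment \<psi> M k)"
proof -
  have "integrable M (\<psi> k)" for k
  proof -
    have "C0 (\<psi> k)" using assms(1) unfolding schauder_basis_C0_def by simp
    then show ?thesis using assms(2) C0_bc bc_integrable by blast
  qed
  then show ?thesis unfolding moment_def by (simp add: integral_sum)
qed

lemma C0_conv:
  assumes sb: "schauder_basis_C0 \<psi>" and mus: "\<And>n. \<mu>s n \<in> prob_measures" and mu: "\<mu> \<in> prob_measures"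
    and lim: "\<And>k. (\<lambda>n. moment \<psi> (\<mu>s n) k) \<longlonglongrightarrow> moment \<psi> \<mu> k" and f: "C0 f"
  shows "(\<lambda>n. integral\<^sup>L (\<mu>s n) f) \<longlonglongrightarrow> integral\<^sup>L \<mu> f"
proof (rule approx_tendsto)
  fix e :: real assume e: "e > 0"
  obtain c where c: "uniform_limit UNIV (\<lambda>n x. \<Sum>k<n. c k * \<psi> k x) f sequentially"
  proof -
    have "\<exists>!c. uniform_limit UNIV (\<lambda>n x. \<Sum>k<n. c k * \<psi> k x) f sequentially"
      using sb f unfolding schauder_basis_C0_def by simp
    then show ?thesis using that ex1_implies_ex by blast
  qed
  have "\<forall>\<^sub>F n in sequentially. \<forall>x\<in>UNIV. dist (\<Sum>k<n. c k * \<psi> k x) (f x) < e"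
    using uniform_limit_iff[THEN iffD1, OF c, rule_format, OF e] .
  then obtain N where N: "\<And>x. dist (\<Sum>k<N. c k * \<psi> k x) (f x) < e"
    unfolding eventually_sequentially by blast
  define S where "S = (\<lambda>x. \<Sum>k<N. c k * \<psi> k x)"
  have cont: "continuous_on UNIV (\<psi> k)" for k using sb unfolding schauder_basis_C0_def C0_def by simp
  have fbc: "bounded_continuous f" using f C0_bc by blast
  then obtain B where B: "\<And>x. \<bar>f x\<bar> \<le> B" using bc_bounded by blast
  have Sb: "\<bar>S x\<bar> \<le> B + e" for x using N[of x] B[of x] unfolding S_def dist_real_def by linarith
  have "continuous_on UNIV S" unfolding S_def by (intro continuous_intros cont)
  then have Sbc: "bounded_continuous S" unfolding bounded_continuous_def bounded_iff
    using Sb by (intro conjI exI[of _ "B+e"]) auto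
  have close: "\<bar>f x - S x\<bar> \<le> e" for x using N[of x] unfolding S_def dist_real_def by simp
  show "\<exists>b bl. b \<longlonglongrightarrow> bl \<and> (\<forall>\<^sub>F n in sequentially. \<bar>integral\<^sup>L (\<mu>s n) f - b n\<bar> \<le> e) \<and>
           \<bar>integral\<^sup>L \<mu> f - bl\<bar> \<le> e"
  proof (intro exI conjI)
    show "(\<lambda>n. integral\<^sup>L (\<mu>s n) S) \<longlonglongrightarrow> integral\<^sup>L \<mu> S"
      unfolding S_def integral_partial[OF sb mus] integral_partial[OF sb mu]
      by (intro tendsto_intros lim)
    show "\<forall>\<^sub>F n in sequentially. \<bar>integral\<^sup>L (\<mu>s n) f - integral\<^sup>L (\<mu>s n) S\<bar> \<le> e"
      using integral_close[OF mus fbc Sbc close] by simp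
    show "\<bar>integral\<^sup>L \<mu> f - integral\<^sup>L \<mu> S\<bar> \<le> e"
      using integral_close[OF mu fbc Sbc close] by simp
  qed
qed


lemma bump:
  fixes K V L :: "'a::metric_space set"
  assumes "compact K" "open V" "K \<subseteq> V" "V \<subseteq> L" "compact L"
  obtains \<phi> :: "'a \<Rightarrow> real" where "continuous_on UNIV \<phi>" "\<And>x. 0 \<le> \<phi> x" "\<And>x. \<phi> x \<le> 1"
    "\<And>x. x \<in> K \<Longrightarrow> \<phi> x = 1" "\<And>x. x \<notin> L \<Longrightarrow> \<phi> x = 0"
proof (cases "K = {}")
  case True
  show ?thesis by (rule that[of "\<lambda>_. 0"]) (use True in auto)
next
  case Kne: False
  show ?thesis
  proof (cases "V = UNIV")
    case True
    then have "L = UNIV" using assms by auto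
    then show ?thesis by (intro that[of "\<lambda>_. 1"]) auto
  next
    case False
    define T where "T = - V"
    have T: "closed T" "T \<noteq> {}" using False assms(2) unfolding T_def by auto
    have K: "closed K" using assms(1) compact_imp_closed by blast
    have pos: "infdist x K + infdist x T > 0" for x
    proof (cases "x \<in> K")
      case True
      then have "x \<notin> T" using assms(3) T_def by auto
      then have "infdist x T > 0" using infdist_pos_not_in_closed[OF T] by blast
      then show ?thesis using infdist_nonneg[of x K] by linarith
    next
      case False
      then have "infdist x K > 0" using infdist_pos_not_in_closed[OF K Kne] by blast
      then show ?thesis using infdist_nonneg[of x T] by linarith
    qed
    define \<phi> where "\<phi> x = infdist x T / (infdist x K + infdist x T)" for x
    show ?thesis
    proof (rule that[of \<phi>])
      show "continuous_on UNIV \<phi>" unfolding \<phi>_def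
        using pos by (intro continuous_intros) (auto simp: less_le)
      show "0 \<le> \<phi> x" for x unfolding \<phi>_def using pos[of x] by (intro divide_nonneg_pos infdist_nonneg)
      show "\<phi> x \<le> 1" for x unfolding \<phi>_def using infdist_nonneg[of x K] pos[of x] by simp
      show "\<phi> x = 1" if "x \<in> K" for x
        unfolding \<phi>_def using pos[of x] by (simp add: infdist_zero that)
      show "\<phi> x = 0" if "x \<notin> L" for x
      proof -
        have "x \<in> T" using that assms(4) T_def by auto
        then show ?thesis unfolding \<phi>_def by (simp add: infdist_zero)
      qed
    qed
  qed
qed

lemma exhaust:
  assumes lc: "locally_compact_space (euclidean :: 'a::metric_space topology)"
    and sep: "separable_space (euclidean :: 'a topology)"
  obtains A V L :: "nat \<Rightarrow> 'a::metric_space set" where "\<And>i. compact (A i)" "\<And>i. open (V i)"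
    "\<And>i. A i \<subseteq> V i" "\<And>i. V i \<subseteq> L i" "\<And>i. compact (L i)" "(\<Union>i. A i) = UNIV"
proof -
  obtain D :: "'a set" where D: "countable D" "closure D = UNIV"
    using sep unfolding separable_space_def by auto
  define F where "F = {(d, n::nat). d \<in> D \<and> compact (cball d (2 / Suc n))}"
  have cover: "\<exists>p\<in>F. x \<in> cball (fst p) (1 / Suc (snd p))" for x
  proof -
    obtain U K where UK: "open U" "compact K" "x \<in> U" "U \<subseteq> K"
      using lc unfolding locally_compact_space_def by (metis compactin_euclidean_iff open_openin topspace_euclidean UNIV_I)
    obtain r where r: "r > 0" "ball x r \<subseteq> U" using UK openE by blast
    obtain n :: nat where n: "1 / Suc n < r / 4"
      by (metis r(1) divide_pos_pos inverse_eq_divide reals_Archimedean zero_less_numeral)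
    obtain d where d: "d \<in> D" "dist d x < 1 / Suc n"
    proof -
      have "1 / real (Suc n) > 0" by simp
      then show ?thesis using D(2) closure_approachable[of x D] that by blast
    qed
    have sub: "cball d (2 / Suc n) \<subseteq> K"
    proof
      fix y assume "y \<in> cball d (2 / Suc n)"
      then have "dist d y \<le> 2 / Suc n" by simp
      moreover have "2 / real (Suc n) = 2 * (1 / Suc n)" by simp
      ultimately have "dist x y < r" using d(2) n r(1) dist_triangle[of x y d] by (simp only: dist_commute)
      then show "y \<in> K" using r UK by auto
    qed
    have "compact (cball d (2 / Suc n))"
      using compact_Int_closed[OF UK(2) closed_cball[of d "2 / Suc n"]] sub
      by (simp add: Int_absorb1)
    then have "(d, n) \<in> F" using d unfolding F_def by auto
    moreover have "x \<in> cball d (1 / Suc n)" using d(2) by (simp add: dist_commute)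
    ultimately show ?thesis by force
  qed
  have Fne: "F \<noteq> {}" using cover by blast
  have Fc: "countable F"
    by (rule countable_subset[of _ "D \<times> UNIV"]) (auto simp: F_def D(1))
  define h where "h = from_nat_into F"
  have hF: "h i \<in> F" for i using Fne unfolding h_def by (simp add: from_nat_into)
  have Fh: "p \<in> F \<Longrightarrow> \<exists>i. h i = p" for p using Fc Fne unfolding h_def
    by (metis from_nat_into_to_nat_on)
  show ?thesis
  proof (rule that[of "\<lambda>i. cball (fst (h i)) (1 / Suc (snd (h i)))"
        "\<lambda>i. ball (fst (h i)) (2 / Suc (snd (h i)))" "\<lambda>i. cball (fst (h i)) (2 / Suc (snd (h i)))"])
    show "compact (cball (fst (h i)) (2 / Suc (snd (h i))))" for i
      using hF[of i] unfolding F_def by auto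
    show "compact (cball (fst (h i)) (1 / Suc (snd (h i))))" for i
    proof -
      have "cball (fst (h i)) (1 / Suc (snd (h i))) \<subseteq> cball (fst (h i)) (2 / Suc (snd (h i)))"
        by (intro subset_cball) (simp add: divide_right_mono)
      then have "cball (fst (h i)) (1 / Suc (snd (h i))) = cball (fst (h i)) (2 / Suc (snd (h i))) \<inter> cball (fst (h i)) (1 / Suc (snd (h i)))"
        by blast
      then show ?thesis using hF[of i] unfolding F_def by (metis (no_types, lifting) case_prodD compact_Int_closed closed_cball mem_Collect_eq prod.collapse)
    qed
    show "cball (fst (h i)) (1 / Suc (snd (h i))) \<subseteq> ball (fst (h i)) (2 / Suc (snd (h i)))" for i
    proof -
      have "1 / real (Suc (snd (h i))) < 2 / Suc (snd (h i))" by (simp add: divide_strict_right_mono)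
      show ?thesis
      proof
        fix y assume "y \<in> cball (fst (h i)) (1 / Suc (snd (h i)))"
        then have "dist (fst (h i)) y \<le> 1 / Suc (snd (h i))" by simp
        with \<open>1 / real (Suc (snd (h i))) < 2 / Suc (snd (h i))\<close>
        show "y \<in> ball (fst (h i)) (2 / Suc (snd (h i)))" by simp
      qed
    qed
    show "ball (fst (h i)) (2 / Suc (snd (h i))) \<subseteq> cball (fst (h i)) (2 / Suc (snd (h i)))" for i
      by auto
    show "open (ball (fst (h i)) (2 / Suc (snd (h i))))" for i by simp
    show "(\<Union>i. cball (fst (h i)) (1 / Suc (snd (h i)))) = UNIV"
    proof -
      have "x \<in> (\<Union>i. cball (fst (h i)) (1 / Suc (snd (h i))))" for x
      proof -
        obtain p where p: "p \<in> F" "x \<in> cball (fst p) (1 / Suc (snd p))" using cover by blast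
        obtain i where "h i = p" using Fh[OF p(1)] by blast
        then show ?thesis using p(2) by blast
      qed
      then show ?thesis by blast
    qed
  qed
qed


lemma bc_mult:
  assumes "bounded_continuous f" "bounded_continuous g"
  shows "bounded_continuous (\<lambda>x. f x * g x)"
proof -
  obtain B1 where B1: "\<And>x. \<bar>f x\<bar> \<le> B1" using bc_bounded assms(1) by blast
  obtain B2 where B2: "\<And>x. \<bar>g x\<bar> \<le> B2" using bc_bounded assms(2) by blast
  have "\<bar>f x * g x\<bar> \<le> B1 * B2" for x
    unfolding abs_mult using B1[of x] B2[of x] by (intro mult_mono) auto
  moreover have "continuous_on UNIV (\<lambda>x. f x * g x)"
    using assms unfolding bounded_continuous_def by (intro continuous_intros) auto
  ultimately show ?thesis unfolding bounded_continuous_def bounded_iff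
    by (intro conjI exI[of _ "B1 * B2"]) auto
qed

lemma tail_bound:
  assumes "M \<in> prob_measures" "bounded_continuous f" "bounded_continuous \<phi>"
    "\<And>x. \<bar>f x\<bar> \<le> B" "\<And>x. 0 \<le> \<phi> x" "\<And>x. \<phi> x \<le> 1"
  shows "\<bar>integral\<^sup>L M f - integral\<^sup>L M (\<lambda>x. f x * \<phi> x)\<bar> \<le> B * (1 - integral\<^sup>L M \<phi>)"
proof -
  interpret prob_space M using prob_measuresD assms by blast
  have i: "integrable M f" "integrable M \<phi>" using bc_integrable assms by blast+
  have i2: "integrable M (\<lambda>x. f x * \<phi> x)"
    using assms bc_mult bc_integrable by blast
  have "\<bar>integral\<^sup>L M f - integral\<^sup>L M (\<lambda>x. f x * \<phi> x)\<bar> = \<bar>integral\<^sup>L M (\<lambda>x. f x - f x * \<phi> x)\<bar>"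
    using i i2 by simp
  also have "\<dots> \<le> integral\<^sup>L M (\<lambda>x. \<bar>f x - f x * \<phi> x\<bar>)"
    by (rule integral_abs_bound)
  also have "\<dots> \<le> integral\<^sup>L M (\<lambda>x. B - B * \<phi> x)"
  proof (intro integral_mono)
    show "integrable M (\<lambda>x. \<bar>f x - f x * \<phi> x\<bar>)" using i i2 by auto
    show "integrable M (\<lambda>x. B - B * \<phi> x)" using i by auto
    fix x
    have "\<bar>f x - f x * \<phi> x\<bar> = \<bar>f x\<bar> * (1 - \<phi> x)"
    proof -
      have "f x - f x * \<phi> x = f x * (1 - \<phi> x)" by (simp add: algebra_simps)
      then show ?thesis using assms(6)[of x] by (simp add: abs_mult)
    qed
    also have "\<dots> \<le> B * (1 - \<phi> x)" using assms(4)[of x] assms(6)[of x] by (intro mult_right_mono) auto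
    finally show "\<bar>f x - f x * \<phi> x\<bar> \<le> B - B * \<phi> x" by (simp add: algebra_simps)
  qed
  also have "\<dots> = B * (1 - integral\<^sup>L M \<phi>)" using i by (simp add: prob_space algebra_simps)
  finally show ?thesis .
qed

lemma C0_compact_support:
  assumes "continuous_on UNIV g" "compact L" "\<And>x. x \<notin> L \<Longrightarrow> g x = 0"
  shows "C0 g"
  unfolding C0_def using assms by auto

lemma bc_conv:
  assumes lc: "locally_compact_space (euclidean :: 'a::metric_space topology)"
    and sep: "separable_space (euclidean :: 'a topology)"
    and sb: "schauder_basis_C0 (\<psi> :: nat \<Rightarrow> 'a \<Rightarrow> real)"
    and mus: "\<And>n. \<mu>s n \<in> prob_measures" and mu: "\<mu> \<in> prob_measures"
    and lim: "\<And>k. (\<lambda>n. moment \<psi> (\<mu>s n) k) \<longlonglongrightarrow> moment \<psi> \<mu> k" and f: "bounded_continuous f"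
  shows "(\<lambda>n. integral\<^sup>L (\<mu>s n) f) \<longlonglongrightarrow> integral\<^sup>L \<mu> f"
proof (rule approx_tendsto)
  fix e :: real assume e: "e > 0"
  interpret P: prob_space \<mu> using prob_measuresD mu by blast
  obtain A V L :: "nat \<Rightarrow> 'a set" where AVL: "\<And>i. compact (A i)" "\<And>i. open (V i)"
    "\<And>i. A i \<subseteq> V i" "\<And>i. V i \<subseteq> L i" "\<And>i. compact (L i)" "(\<Union>i. A i) = UNIV"
    using exhaust[OF lc sep] by blast
  define KK where "KK n = (\<Union>i<n. A i)" for n
  have KKs: "range KK \<subseteq> sets \<mu>"
  proof -
    have "compact (KK n)" for n unfolding KK_def using AVL(1) by auto
    then show ?thesis using prob_measuresD(2)[OF mu] by (auto intro: borel_closed compact_imp_closed)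
  qed
  have KKi: "incseq KK" by (rule incseq_SucI) (auto simp: KK_def lessThan_Suc)
  have KKU: "(\<Union>n. KK n) = UNIV"
  proof -
    have "A i \<subseteq> KK (Suc i)" for i unfolding KK_def by auto
    moreover have "\<exists>i. x \<in> A i" for x using AVL(6) by (metis UNIV_I UN_iff)
    ultimately show ?thesis by (metis UNIV_eq_I UN_I UNIV_I subsetD)
  qed
  have "(\<lambda>n. measure \<mu> (KK n)) \<longlonglongrightarrow> measure \<mu> (\<Union>n. KK n)"
    by (rule P.finite_Lim_measure_incseq[OF KKs KKi])
  then have mlim: "(\<lambda>n. measure \<mu> (KK n)) \<longlonglongrightarrow> 1"
    using KKU P.prob_space prob_measuresD(3)[OF mu] by simp
  obtain B0 where B0: "\<And>x. \<bar>f x\<bar> \<le> B0" using bc_bounded f by blast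
  define B where "B = max B0 1"
  have B: "\<And>x. \<bar>f x\<bar> \<le> B" "B > 0" using B0 unfolding B_def by (meson max.coboundedI1 order_trans, simp)
  define \<delta> where "\<delta> = e / B"
  have \<delta>: "\<delta> > 0" "B * \<delta> = e" using e B(2) unfolding \<delta>_def by auto
  have "\<forall>\<^sub>F n in sequentially. measure \<mu> (KK n) > 1 - \<delta>"
    using order_tendstoD(1)[OF mlim] \<delta> by simp
  then obtain n0 where n0: "measure \<mu> (KK n0) > 1 - \<delta>" using eventually_sequentially by auto
  have cK: "compact (KK n0)" unfolding KK_def using AVL(1) by auto
  have oV: "open (\<Union>i<n0. V i)" using AVL(2) by auto
  have cL: "compact (\<Union>i<n0. L i)" using AVL(5) by auto
  obtain \<phi> :: "'a \<Rightarrow> real" where \<phi>: "continuous_on UNIV \<phi>" "\<And>x. 0 \<le> \<phi> x" "\<And>x. \<phi> x \<le> 1"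
    "\<And>x. x \<in> KK n0 \<Longrightarrow> \<phi> x = 1" "\<And>x. x \<notin> (\<Union>i<n0. L i) \<Longrightarrow> \<phi> x = 0"
  proof -
    have s1: "KK n0 \<subseteq> (\<Union>i<n0. V i)" unfolding KK_def using AVL(3) by (intro UN_mono) auto
    have s2: "(\<Union>i<n0. V i) \<subseteq> (\<Union>i<n0. L i)" using AVL(4) by (intro UN_mono) auto
    show ?thesis using bump[OF cK oV s1 s2 cL] that by blast
  qed
  have C0\<phi>: "C0 \<phi>" using C0_compact_support[OF \<phi>(1) cL \<phi>(5)] .
  have bc\<phi>: "bounded_continuous \<phi>" using C0\<phi> C0_bc by blast
  have C0g: "C0 (\<lambda>x. f x * \<phi> x)"
  proof (rule C0_compact_support[OF _ cL])
    show "continuous_on UNIV (\<lambda>x. f x * \<phi> x)"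
      using f \<phi>(1) unfolding bounded_continuous_def by (intro continuous_on_mult) auto
    show "f x * \<phi> x = 0" if "x \<notin> (\<Union>i<n0. L i)" for x using \<phi>(5)[OF that] by simp
  qed
  have int\<phi>: "integral\<^sup>L \<mu> \<phi> > 1 - \<delta>"
  proof -
    have "measure \<mu> (KK n0) = integral\<^sup>L \<mu> (indicator (KK n0))"
      using prob_measuresD(3)[OF mu] by simp
    also have "\<dots> \<le> integral\<^sup>L \<mu> \<phi>"
    proof (rule integral_mono)
      have "KK n0 \<in> sets \<mu>" using KKs by auto
      then show "integrable \<mu> (indicator (KK n0) :: 'a \<Rightarrow> real)"
        by (intro integrable_real_indicator) (auto simp: P.emeasure_eq_measure)
      show "integrable \<mu> \<phi>" using bc_integrable[OF mu bc\<phi>] .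
      show "indicator (KK n0) x \<le> \<phi> x" for x using \<phi>(2,4)[of x] by (auto simp: indicator_def)
    qed
    finally show ?thesis using n0 by simp
  qed
  have "\<forall>\<^sub>F n in sequentially. integral\<^sup>L (\<mu>s n) \<phi> > 1 - \<delta>"
    using order_tendstoD(1)[OF C0_conv[OF sb mus mu lim C0\<phi>] int\<phi>] .
  show "\<exists>b bl. b \<longlonglongrightarrow> bl \<and> (\<forall>\<^sub>F n in sequentially. \<bar>integral\<^sup>L (\<mu>s n) f - b n\<bar> \<le> e) \<and>
           \<bar>integral\<^sup>L \<mu> f - bl\<bar> \<le> e"
  proof (intro exI conjI)
    show "(\<lambda>n. integral\<^sup>L (\<mu>s n) (\<lambda>x. f x * \<phi> x)) \<longlonglongrightarrow> integral\<^sup>L \<mu> (\<lambda>x. f x * \<phi> x)"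
      by (rule C0_conv[OF sb mus mu lim C0g])
    show "\<forall>\<^sub>F n in sequentially. \<bar>integral\<^sup>L (\<mu>s n) f - integral\<^sup>L (\<mu>s n) (\<lambda>x. f x * \<phi> x)\<bar> \<le> e"
      using \<open>\<forall>\<^sub>F n in sequentially. integral\<^sup>L (\<mu>s n) \<phi> > 1 - \<delta>\<close>
    proof eventually_elim
      case (elim n)
      have "\<bar>integral\<^sup>L (\<mu>s n) f - integral\<^sup>L (\<mu>s n) (\<lambda>x. f x * \<phi> x)\<bar> \<le> B * (1 - integral\<^sup>L (\<mu>s n) \<phi>)"
        by (rule tail_bound[OF mus f bc\<phi> B(1) \<phi>(2,3)])
      also have "\<dots> \<le> B * \<delta>" using elim B(2) by (intro mult_left_mono) auto
      finally show ?case using \<delta> by simp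
    qed
    have "\<bar>integral\<^sup>L \<mu> f - integral\<^sup>L \<mu> (\<lambda>x. f x * \<phi> x)\<bar> \<le> B * (1 - integral\<^sup>L \<mu> \<phi>)"
      by (rule tail_bound[OF mu f bc\<phi> B(1) \<phi>(2,3)])
    also have "\<dots> \<le> B * \<delta>" using int\<phi> B(2) by (intro mult_left_mono) auto
    finally show "\<bar>integral\<^sup>L \<mu> f - integral\<^sup>L \<mu> (\<lambda>x. f x * \<phi> x)\<bar> \<le> e" using \<delta> by simp
  qed
qed


lemma measure_unique:
  assumes mu: "\<mu> \<in> prob_measures" and nu: "\<nu> \<in> prob_measures"
    and eq: "\<And>f. bounded_continuous f \<Longrightarrow> integral\<^sup>L \<mu> f = integral\<^sup>L \<nu> f"
  shows "\<mu> = (\<nu> :: 'a::metric_space measure)"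
proof -
  interpret P: prob_space \<mu> using prob_measuresD mu by blast
  interpret Q: prob_space \<nu> using prob_measuresD nu by blast
  have lim: "(\<lambda>j. integral\<^sup>L M (\<lambda>x. max 0 (1 - real j * infdist x F))) \<longlonglongrightarrow> measure M F"
    if M: "M \<in> prob_measures" and F: "closed F" "F \<noteq> {}" for M and F :: "'a set"
  proof -
    interpret R: prob_space M using prob_measuresD M by blast
    have sM: "sets M = sets borel" using prob_measuresD(2)[OF M] .
    have "(\<lambda>j. integral\<^sup>L M (\<lambda>x. max 0 (1 - real j * infdist x F))) \<longlonglongrightarrow> integral\<^sup>L M (indicator F :: 'a \<Rightarrow> real)"
    proof (rule integral_dominated_convergence[where w="\<lambda>_. 1"])
      show "(indicator F :: 'a \<Rightarrow> real) \<in> borel_measurable M"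
        using F(1) sM by (simp add: measurable_cong_sets[OF sM refl] borel_closed)
      show "(\<lambda>x. max 0 (1 - real j * infdist x F)) \<in> borel_measurable M" for j
        unfolding measurable_cong_sets[OF sM refl]
        by (intro borel_measurable_continuous_onI continuous_intros)
      show "integrable M (\<lambda>_. 1::real)" by simp
      show "AE x in M. norm (max 0 (1 - real j * infdist x F)) \<le> 1" for j
      proof (intro AE_I2)
        fix x
        have "0 \<le> real j * infdist x F" using infdist_nonneg[of x F] by simp
        then show "norm (max 0 (1 - real j * infdist x F)) \<le> 1" by simp
      qed
      show "AE x in M. (\<lambda>j. max 0 (1 - real j * infdist x F)) \<longlonglongrightarrow> indicator F x"
      proof (intro AE_I2)
        fix x
        show "(\<lambda>j. max 0 (1 - real j * infdist x F)) \<longlonglongrightarrow> indicator F x"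
        proof (cases "x \<in> F")
          case True
          then have "infdist x F = 0" by (simp add: infdist_zero)
          then show ?thesis using True by simp
        next
          case False
          then have d: "infdist x F > 0" using infdist_pos_not_in_closed F by blast
          obtain j0 :: nat where j0: "1 / infdist x F < j0" using reals_Archimedean2 by blast
          have "\<forall>\<^sub>F j in sequentially. max 0 (1 - real j * infdist x F) = 0"
            unfolding eventually_sequentially
          proof (intro exI allI impI)
            fix j assume "j0 \<le> j"
            then have "1 / infdist x F < real j" using j0 by linarith
            then have "1 < real j * infdist x F" using d by (simp add: field_simps)
            then show "max 0 (1 - real j * infdist x F) = 0" by simp
          qed
          then show ?thesis using False by (simp add: tendsto_eventually)
        qed
      qed
    qed
    then show ?thesis using prob_measuresD(3)[OF M] by simp
  qed
  have closed_eq: "measure \<mu> F = measure \<nu> F" if F: "closed F" for F :: "'a set"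
  proof (cases "F = {}")
    case True then show ?thesis by simp
  next
    case False
    have bc: "bounded_continuous (\<lambda>x. max 0 (1 - real j * infdist x F))" for j
      unfolding bounded_continuous_def bounded_iff
    proof (intro conjI exI[of _ 1] ballI)
      show "continuous_on UNIV (\<lambda>x. max 0 (1 - real j * infdist x F))"
        by (intro continuous_intros)
      fix y assume "y \<in> range (\<lambda>x. max 0 (1 - real j * infdist x F))"
      then obtain x where "y = max 0 (1 - real j * infdist x F)" by blast
      moreover have "0 \<le> real j * infdist x F" using infdist_nonneg[of x F] by simp
      ultimately show "norm y \<le> 1" by simp
    qed
    show ?thesis
      using LIMSEQ_unique[OF lim[OF mu F False]] lim[OF nu F False] eq[OF bc] by simp
  qed
  show ?thesis
  proof (rule measure_eqI_generator_eq[where E="Collect closed" and \<Omega>=UNIV and A="\<lambda>_. UNIV"])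
    show "Int_stable (Collect closed)" by (auto simp: Int_stable_def)
    show "Collect closed \<subseteq> Pow UNIV" by simp
    show "emeasure \<mu> X = emeasure \<nu> X" if "X \<in> Collect closed" for X
      using closed_eq[of X] that by (simp add: P.emeasure_eq_measure Q.emeasure_eq_measure)
    have "sets (borel :: 'a measure) = sigma_sets UNIV (Collect closed)"
      by (subst borel_eq_closed) (simp add: sets_measure_of)
    then show "sets \<mu> = sigma_sets UNIV (Collect closed)" "sets \<nu> = sigma_sets UNIV (Collect closed)"
      using prob_measuresD(2)[OF mu] prob_measuresD(2)[OF nu] by auto
    show "range (\<lambda>_. UNIV) \<subseteq> Collect closed" by auto
    show "(\<Union>i. UNIV) = UNIV" by simp
    show "emeasure \<mu> UNIV \<noteq> \<infinity>" for i :: nat by (simp add: P.emeasure_eq_measure)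
  qed
qed


lemma gens_Union:
  "\<Union>{{M. integral\<^sup>L M f \<in> U} | f U. bounded_continuous f \<and> open U} = (UNIV :: 'a::topological_space measure set)"
proof -
  have "{M. integral\<^sup>L M (\<lambda>_. 0::real) \<in> UNIV} \<in>
     {{M. integral\<^sup>L M f \<in> U} | f U. bounded_continuous f \<and> open U}"
    by (intro CollectI exI[of _ "\<lambda>_. 0::real"] exI[of _ "UNIV :: real set"])
       (auto simp: bounded_continuous_def)
  then show ?thesis by blast
qed

lemma topspace_weak: "topspace weak_topology = prob_measures"
proof -
  have "{M. integral\<^sup>L M (\<lambda>_. 0::real) \<in> UNIV} \<in>
     {{M. integral\<^sup>L M f \<in> U} | f U. bounded_continuous f \<and> open U}"
    by (intro CollectI exI[of _ "\<lambda>_. 0::real"] exI[of _ "UNIV :: real set"])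
       (auto simp: bounded_continuous_def)
  then have "\<Union>{{M. integral\<^sup>L M f \<in> U} | f U. bounded_continuous f \<and> open U} = (UNIV :: 'a measure set)"
    by blast
  then show ?thesis unfolding weak_topology_def by simp
qed

lemma integral_cont_weak:
  assumes "bounded_continuous f"
  shows "continuous_map weak_topology euclideanreal (\<lambda>M. integral\<^sup>L M f)"
  unfolding continuous_map_def
proof (intro conjI allI impI, simp)
  fix U :: "real set" assume "openin euclideanreal U"
  then have U: "open U" by simp
  have "openin (topology_generated_by {{M. integral\<^sup>L M f \<in> U} | f U. bounded_continuous f \<and> open U})
     {M. integral\<^sup>L M f \<in> U}"
    unfolding openin_topology_generated_by_iff
    by (rule generate_topology_on.Basis) (use assms U in blast)
  then have "openin weak_topology ({M. integral\<^sup>L M f \<in> U} \<inter> prob_measures)"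
    unfolding weak_topology_def by (auto simp: openin_subtopology)
  moreover have "{x \<in> topspace weak_topology. integral\<^sup>L x f \<in> U} = {M. integral\<^sup>L M f \<in> U} \<inter> prob_measures"
    by (auto simp: topspace_weak)
  ultimately show "openin weak_topology {x \<in> topspace weak_topology. integral\<^sup>L x f \<in> U}" by simp
qed

lemma coord_tendsto:
  assumes "u \<longlonglongrightarrow> (a :: nat \<Rightarrow> real)"
  shows "(\<lambda>n. u n k) \<longlonglongrightarrow> a k"
proof -
  have "isCont (\<lambda>x::nat \<Rightarrow> real. x k) a"
    using continuous_on_product_coordinates[of k] continuous_on_eq_continuous_at[OF open_UNIV] by blast
  then show ?thesis using isCont_tendsto_compose[OF _ assms] by blast
qed

theorem corollary1:
  fixes \<psi> :: "nat \<Rightarrow> 'a::metric_space \<Rightarrow> real"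
  assumes "locally_compact_space (euclidean :: 'a topology)"
    and "separable_space (euclidean :: 'a topology)"
    and "schauder_basis_C0 \<psi>"
  shows "homeomorphic_map weak_topology
           (subtopology (product_topology (\<lambda>_. euclideanreal) UNIV) (moment \<psi> ` prob_measures))
           (moment \<psi>)"
proof -
  note lc = assms(1) and sep = assms(2) and sb = assms(3)
  define m where "m = moment \<psi>"
  define P where "P = (prob_measures :: 'a measure set)"
  define g where "g = inv_into P m"
  have PT: "product_topology (\<lambda>_. euclideanreal) UNIV = (euclidean :: (nat \<Rightarrow> real) topology)"
    by (rule euclidean_product_topology)
  have bc\<psi>: "bounded_continuous (\<psi> k)" for k
  proof -
    have "C0 (\<psi> k)" using sb unfolding schauder_basis_C0_def by simp
    then show ?thesis by (rule C0_bc)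
  qed
  have inj: "inj_on m P"
  proof (rule inj_onI)
    fix \<mu> \<nu> assume mu: "\<mu> \<in> P" and nu: "\<nu> \<in> P" and e: "m \<mu> = m \<nu>"
    show "\<mu> = \<nu>"
    proof (rule measure_unique)
      show "\<mu> \<in> prob_measures" "\<nu> \<in> prob_measures" using mu nu P_def by auto
      fix f :: "'a \<Rightarrow> real" assume f: "bounded_continuous f"
      have "(\<lambda>n. integral\<^sup>L \<mu> f) \<longlonglongrightarrow> integral\<^sup>L \<nu> f"
        using bc_conv[OF lc sep sb, of "\<lambda>_. \<mu>" \<nu>] mu nu e f unfolding P_def m_def by simp
      then show "integral\<^sup>L \<mu> f = integral\<^sup>L \<nu> f" by (simp add: LIMSEQ_const_iff)
    qed
  qed
  have gP: "g y \<in> P" if "y \<in> m ` P" for y using that unfolding g_def by (rule inv_into_into)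
  have mg: "m (g y) = y" if "y \<in> m ` P" for y using that unfolding g_def by (rule f_inv_into_f)
  have gm: "g (m x) = x" if "x \<in> P" for x using that inj unfolding g_def by (simp add: inv_into_f_f)
  have contm: "continuous_map weak_topology (subtopology (product_topology (\<lambda>_. euclideanreal) UNIV) (m ` P)) m"
  proof (rule continuous_map_into_subtopology)
    show "continuous_map weak_topology (product_topology (\<lambda>_. euclideanreal) UNIV) m"
      unfolding continuous_map_componentwise_UNIV m_def moment_def
      using integral_cont_weak[OF bc\<psi>] by simp
    show "m \<in> topspace weak_topology \<rightarrow> m ` P" by (simp add: topspace_weak P_def)
  qed
  have contg: "continuous_map (subtopology (product_topology (\<lambda>_. euclideanreal) UNIV) (m ` P)) weak_topology g"
  proof -
    let ?S = "{{M. integral\<^sup>L M f \<in> U} | f U. bounded_continuous f \<and> open U} :: 'a measure set set"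
    have "continuous_map (top_of_set (m ` P)) (topology_generated_by ?S) g"
    proof (rule continuous_on_generated_topo)
      fix W assume "W \<in> ?S"
      then obtain f U where W: "W = {M. integral\<^sup>L M f \<in> U}" "bounded_continuous f" "open U" by blast
      have cont: "continuous_on (m ` P) (\<lambda>y. integral\<^sup>L (g y) f)"
      proof (rule continuous_on_sequentiallyI)
        fix u a assume u: "\<forall>n. u n \<in> m ` P" "a \<in> m ` P" "u \<longlonglongrightarrow> a"
        show "(\<lambda>n. integral\<^sup>L (g (u n)) f) \<longlonglongrightarrow> integral\<^sup>L (g a) f"
        proof (rule bc_conv[OF lc sep sb])
          show "g (u n) \<in> prob_measures" for n using gP[of "u n"] u(1) unfolding P_def by blast
          show "g a \<in> prob_measures" using gP[OF u(2)] unfolding P_def .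
          show "(\<lambda>n. moment \<psi> (g (u n)) k) \<longlonglongrightarrow> moment \<psi> (g a) k" for k
            using coord_tendsto[OF u(3), of k] mg u(1,2) unfolding m_def by simp
          show "bounded_continuous f" by (rule W(2))
        qed
      qed
      have "openin (top_of_set (m ` P)) (m ` P \<inter> (\<lambda>y. integral\<^sup>L (g y) f) -` U)"
        by (rule continuous_openin_preimage_gen[OF cont W(3)])
      moreover have "g -` W \<inter> topspace (top_of_set (m ` P)) = m ` P \<inter> (\<lambda>y. integral\<^sup>L (g y) f) -` U"
        unfolding W(1) by auto
      ultimately show "openin (top_of_set (m ` P)) (g -` W \<inter> topspace (top_of_set (m ` P)))" by simp
    next
      show "g ` topspace (top_of_set (m ` P)) \<subseteq> \<Union> ?S" by (simp only: gens_Union subset_UNIV)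
    qed
    then show ?thesis unfolding weak_topology_def PT using gP P_def
      by (intro continuous_map_into_subtopology) auto
  qed
  have "homeomorphic_maps weak_topology (subtopology (product_topology (\<lambda>_. euclideanreal) UNIV) (m ` P)) m g"
    unfolding homeomorphic_maps_def
    using contm contg gm mg by (simp add: topspace_weak P_def PT)
  then show ?thesis unfolding homeomorphic_map_maps m_def P_def by blast
qed

end
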